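(* Consider the miners' game with $n$ miners $s_1,\dots,s_n$, parameters $R>0$, $N>0$, unit prices $\lambda_1,\dots,\lambda_n>0$, where miner $s_i$ chooses $\mu_i\ge0$ and receives profit $P_i=\frac{\mu_i}{\sum_{j=1}^n\mu_j}RN-\lambda_i\mu_i$ (the fraction being $0$ if $\sum_j\mu_j=0$). Let $\boldsymbol{\mu}^*=(\mu_1^*,\dots,\mu_n^* )$ be a Nash equilibrium of this game. Then for any $i,j$, if $\lambda_i\le\lambda_j$ then $\mu_i^*\ge\mu_j^*$.
   Context: A Nash equilibrium is a profile $\boldsymbol{\mu}^*$ with all $\mu_i^*\ge 0$ such that no miner $s_i$ can strictly increase $P_i$ by unilaterally changing $\mu_i^*$ to another value $\mu_i\ge0$. *)

theory Defs
  imports Complex_Main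
begin

text \<open>Miners are indexed by 0,...,n-1. A strategy profile is mu :: nat => real
  (only the values at i < n matter). Profit of miner i.\<close>

definition miner_profit :: "nat \<Rightarrow> real \<Rightarrow> real \<Rightarrow> (nat \<Rightarrow> real) \<Rightarrow> (nat \<Rightarrow> real) \<Rightarrow> nat \<Rightarrow> real" where
  "miner_profit n R N lam mu i =
     (if (\<Sum>j<n. mu j) = 0 then 0 else mu i / (\<Sum>j<n. mu j) * R * N) - lam i * mu i"

definition nash_equilibrium :: "nat \<Rightarrow> real \<Rightarrow> real \<Rightarrow> (nat \<Rightarrow> real) \<Rightarrow> (nat \<Rightarrow> real) \<Rightarrow> bool" where
  "nash_equilibrium n R N lam mu \<longleftrightarrow>
     (\<forall>i<n. mu i \<ge> 0) \<and>
     (\<forall>i<n. \<forall>x::real. x \<ge> 0 \<longrightarrow>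
        \<not> (miner_profit n R N lam (mu(i := x)) i > miner_profit n R N lam mu i))"

end

theory Submission
  imports Defs
begin

lemma sum_upd:
  fixes mu :: "nat \<Rightarrow> real"
  assumes "j < n"
  shows "(\<Sum>k<n. (mu(j := x)) k) = (\<Sum>k<n. mu k) - mu j + x"
proof -
  have f: "finite {..<n}" "j \<in> {..<n}" using assms by auto
  have "(\<Sum>k<n. (mu(j := x)) k) = (mu(j:=x)) j + (\<Sum>k\<in>{..<n}-{j}. (mu(j := x)) k)"
    using sum.remove[OF f] by blast
  also have "(\<Sum>k\<in>{..<n}-{j}. (mu(j := x)) k) = (\<Sum>k\<in>{..<n}-{j}. mu k)"
    by (rule sum.cong) auto
  also have "(\<Sum>k<n. mu k) = mu j + (\<Sum>k\<in>{..<n}-{j}. mu k)"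
    using sum.remove[OF f] by blast
  ultimately show ?thesis by simp
qed

theorem corollary1:
  fixes n :: nat and R N :: real and lam mu :: "nat \<Rightarrow> real" and i j :: nat
  assumes "R > 0" and "N > 0"
    and "\<forall>k<n. lam k > 0"
    and "nash_equilibrium n R N lam mu"
    and "i < n" and "j < n"
    and "lam i \<le> lam j"
  shows "mu i \<ge> mu j"
proof (rule ccontr)
  assume H: "\<not> mu i \<ge> mu j"
  define S where "S = (\<Sum>k<n. mu k)"
  define T where "T = R * N"
  have T: "T > 0" using assms unfolding T_def by simp
  have nn: "\<forall>k<n. mu k \<ge> 0" and opt: "\<And>k x. k < n \<Longrightarrow> x \<ge> 0 \<Longrightarrow>
      \<not> (miner_profit n R N lam (mu(k := x)) k > miner_profit n R N lam mu k)"
    using assms(4) unfolding nash_equilibrium_def by auto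
  have ij: "i \<noteq> j" using H by auto
  have mi: "mu i \<ge> 0" using nn assms(5) by auto
  have "(\<Sum>k\<in>{i,j}. mu k) \<le> S" unfolding S_def
    by (rule sum_mono2) (use nn assms(5,6) in auto)
  hence Sge: "mu i + mu j \<le> S" using ij by simp
  define e where "e = (mu j - mu i) / 2"
  have e: "e > 0" "e < mu j" using H mi unfolding e_def by auto
  have Spos: "S > 0" using Sge mi H by linarith
  have Se: "S - e > 0" using Sge mi e by linarith
  have pij: "\<And>k. k < n \<Longrightarrow> miner_profit n R N lam mu k = mu k / S * T - lam k * mu k"
    unfolding miner_profit_def S_def[symmetric] T_def using Spos by simp
  have pj: "miner_profit n R N lam (mu(j := mu j - e)) j = (mu j - e) / (S - e) * T - lam j * (mu j - e)"
    unfolding miner_profit_def sum_upd[OF assms(6)] S_def[symmetric] T_def using Se by simp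
  have pi: "miner_profit n R N lam (mu(i := mu i + e)) i = (mu i + e) / (S + e) * T - lam i * (mu i + e)"
    unfolding miner_profit_def sum_upd[OF assms(5)] S_def[symmetric] T_def using Spos e by simp
  have cj: "(mu j - e) / (S - e) * T - lam j * (mu j - e) \<le> mu j / S * T - lam j * mu j"
    using opt[OF assms(6), of "mu j - e"] e pj pij[OF assms(6)] by auto
  have ci: "(mu i + e) / (S + e) * T - lam i * (mu i + e) \<le> mu i / S * T - lam i * mu i"
    using opt[OF assms(5), of "mu i + e"] e mi pi pij[OF assms(5)] by auto
  have dj: "mu j / S - (mu j - e) / (S - e) = e * (S - mu j) / (S * (S - e))"
    using Spos Se by (simp add: field_simps)
  have lj: "lam j * e \<le> T * (e * (S - mu j) / (S * (S - e)))"
  proof -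
    have "lam j * e = lam j * mu j - lam j * (mu j - e)" by (simp add: algebra_simps)
    moreover have "T * (mu j / S - (mu j - e) / (S - e)) = mu j / S * T - (mu j - e) / (S - e) * T"
      by (simp add: algebra_simps)
    ultimately show ?thesis using cj unfolding dj[symmetric] by linarith
  qed
  have di: "(mu i + e) / (S + e) - mu i / S = e * (S - mu i) / (S * (S + e))"
    using Spos e by (simp add: field_simps)
  have li: "T * (e * (S - mu i) / (S * (S + e))) \<le> lam i * e"
  proof -
    have "lam i * e = lam i * (mu i + e) - lam i * mu i" by (simp add: algebra_simps)
    moreover have "T * ((mu i + e) / (S + e) - mu i / S) = (mu i + e) / (S + e) * T - mu i / S * T"
      by (simp add: algebra_simps)
    ultimately show ?thesis using ci unfolding di[symmetric] by linarith
  qed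
  have "lam i * e \<le> lam j * e" using assms(7) e by simp
  hence "T * (e * (S - mu i) / (S * (S + e))) \<le> T * (e * (S - mu j) / (S * (S - e)))"
    using li lj by linarith
  hence "e * (S - mu i) / (S * (S + e)) \<le> e * (S - mu j) / (S * (S - e))"
    using T mult_le_cancel_left_pos[OF T] by (simp only:)
  hence "e * (S - mu i) * (S * (S - e)) \<le> e * (S - mu j) * (S * (S + e))"
    using Spos e Se by (simp add: divide_le_eq le_divide_eq mult.assoc)
  hence "(S - mu i) * (S - e) \<le> (S - mu j) * (S + e)"
    using Spos e by (simp add: mult.assoc mult_le_cancel_left_pos)
  hence "(mu j - mu i) * S \<le> e * (2 * S - mu i - mu j)"
    by (simp add: algebra_simps)
  hence "(mu j - mu i) * S \<le> (mu j - mu i) * (S - (mu i + mu j) / 2)"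
    unfolding e_def by (simp add: algebra_simps)
  hence "S \<le> S - (mu i + mu j) / 2" using H by simp
  thus False using mi H by (simp add: field_simps)
qed

end
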